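(* Let $n\in\mathbb{N}$, $\boldsymbol{A}\in\mathbb{R}^{n\times n}$, $\boldsymbol{b}\in\mathbb{R}^n$ with $(\boldsymbol{A},\boldsymbol{b})$ controllable, and $g:\mathbb{R}^n\to\mathbb{R}$ with $g(\boldsymbol{0})\neq 0$. Let $\mathcal{X}=\bigcup_{i=1}^s\mathcal{X}_i\subset\mathbb{R}^n$ with $s\in\mathbb{N}$ and each $\mathcal{X}_i$ convex, such that for every $i$ either ($g(\boldsymbol{x})\ge 0$ for all $\boldsymbol{x}\in\mathcal{X}_i$ and $g$ is concave on $\mathcal{X}_i$) or ($g(\boldsymbol{x})\le 0$ for all $\boldsymbol{x}\in\mathcal{X}_i$ and $g$ is convex on $\mathcal{X}_i$); assume $\boldsymbol{0}\in\mathrm{int}(\mathcal{X}_1)$, and let $\mathcal{U}=[\underline{u},\overline{u}]$ with $\underline{u}<0<\overline{u}$. Let $\boldsymbol{c}\in\mathbb{R}^n$ satisfy $\boldsymbol{c}^\top\boldsymbol{A}^{i}\boldsymbol{b}=0$ for $i\in\{0,\dots,n-2\}$ and $\boldsymbol{c}^\top\boldsymbol{A}^{n-1}\boldsymbol{b}\neq0$, let $b_0\neq 0$, $a_0,\dots,a_{n-1}\in\mathbb{R}$, $\beta:=\boldsymbol{c}^\top\boldsymbol{A}^{n-1}\boldsymbol{b}$, $\boldsymbol{\alpha}^\top:=\boldsymbol{c}^\top(\boldsymbol{A}^n+\sum_{i=0}^{n-1}a_i\boldsymbol{A}^i)$. Let $\mathcal{X}^\circ:=\{\boldsymbol{x}\in\mathbb{R}^n\mid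 g(\boldsymbol{x})\neq0\}$, $\Psi(\boldsymbol{x},v):=\frac{b_0v-\boldsymbol{\alpha}^\top\boldsymbol{x}}{\beta g(\boldsymbol{x})}$ for $\boldsymbol{x}\in\mathcal{X}^\circ$, and $$\mathcal{Z}:=\Big\{(\boldsymbol{x},v)\in\mathbb{R}^{n+1}\,\Big|\,\boldsymbol{x}\in\mathcal{X}\cap\mathcal{X}^\circ,\ \Psi(\boldsymbol{x},v)\in\mathcal{U}\Big\}\cup\Big\{(\boldsymbol{x},v)\in\mathbb{R}^{n+1}\,\Big|\,\boldsymbol{x}\in\mathcal{X}\setminus\mathcal{X}^\circ,\ v=\tfrac{\boldsymbol{\alpha}^\top\boldsymbol{x}}{b_0}\Big\}.$$ For $i\in\{1,\dots,s\}$ define $\mathcal{U}_i(\boldsymbol{x}):=[\beta g(\boldsymbol{x})\underline{u},\beta g(\boldsymbol{x})\overline{u}]$ if $\beta g(\boldsymbol{x})\ge0$ for all $\boldsymbol{x}\in\mathcal{X}_i$, and $\mathcal{U}_i(\boldsymbol{x}):=[\beta g(\boldsymbol{x})\overline{u},\beta g(\boldsymbol{x})\underline{u}]$ otherwise, and $$\mathcal{Z}_i:=\Big\{(\boldsymbol{x},v)\in\mathbb{R}^{n+1}\,\Big|\,\boldsymbol{x}\in\mathcal{X}_i,\ b_0v-\boldsymbol{\alpha}^\top\boldsymbol{x}\in\mathcal{U}_i(\boldsymbol{x})\Big\}.$$ Then each $\mathcal{Z}_i$ is convex and $\mathcal{Z}=\bigcup_{i=1}^s\mathcal{Z}_i$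.
   Context: This arises from the discrete-time system $\boldsymbol{x}(k+1)=\boldsymbol{A}\boldsymbol{x}(k)+g(\boldsymbol{x}(k))\boldsymbol{b}\,u(k)$ with constraints $\boldsymbol{x}\in\mathcal{X}$, $u\in\mathcal{U}$; $\Psi$ is the exactly linearizing feedback $u=\Psi(\boldsymbol{x},v)$ with artificial input $v$. *)

theory Defs
  imports "HOL-Analysis.Analysis"
begin

definition mat_pow :: "real^'n^'n \<Rightarrow> nat \<Rightarrow> real^'n^'n" where
  "mat_pow A k = (((**) A) ^^ k) (mat 1)"

definition controllable :: "real^'n^'n \<Rightarrow> real^'n \<Rightarrow> bool" where
  "controllable A b \<longleftrightarrow> span {mat_pow A k *v b | k. k < CARD('n)} = UNIV"

definition alpha_vec :: "real^'n^'n \<Rightarrow> real^'n \<Rightarrow> (nat \<Rightarrow> real) \<Rightarrow> real^'n" where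
  "alpha_vec A c a = c v* (mat_pow A CARD('n) + (\<Sum>i<CARD('n). a i *\<^sub>R mat_pow A i))"

definition Psi :: "(real^'n \<Rightarrow> real) \<Rightarrow> real \<Rightarrow> real^'n \<Rightarrow> real \<Rightarrow> real^'n \<Rightarrow> real \<Rightarrow> real" where
  "Psi g \<beta> al b0 x v = (b0 * v - al \<bullet> x) / (\<beta> * g x)"

definition Xcirc :: "(real^'n \<Rightarrow> real) \<Rightarrow> (real^'n) set" where
  "Xcirc g = {x. g x \<noteq> 0}"

definition Zset :: "(real^'n) set \<Rightarrow> (real^'n \<Rightarrow> real) \<Rightarrow> real \<Rightarrow> real^'n \<Rightarrow> real
    \<Rightarrow> real set \<Rightarrow> ((real^'n) \<times> real) set" where
  "Zset X g \<beta> al b0 U =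
     {(x, v). x \<in> X \<inter> Xcirc g \<and> Psi g \<beta> al b0 x v \<in> U}
     \<union> {(x, v). x \<in> X - Xcirc g \<and> v = (al \<bullet> x) / b0}"

definition Ui :: "(real^'n) set \<Rightarrow> (real^'n \<Rightarrow> real) \<Rightarrow> real \<Rightarrow> real \<Rightarrow> real \<Rightarrow> real^'n \<Rightarrow> real set" where
  "Ui Xi g \<beta> ul uu x =
     (if \<forall>y\<in>Xi. \<beta> * g y \<ge> 0 then {\<beta> * g x * ul .. \<beta> * g x * uu}
      else {\<beta> * g x * uu .. \<beta> * g x * ul})"

definition Zi :: "(real^'n) set \<Rightarrow> (real^'n \<Rightarrow> real) \<Rightarrow> real \<Rightarrow> real^'n \<Rightarrow> real
    \<Rightarrow> real \<Rightarrow> real \<Rightarrow> ((real^'n) \<times> real) set" where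
  "Zi Xi g \<beta> al b0 ul uu = {(x, v). x \<in> Xi \<and> b0 * v - al \<bullet> x \<in> Ui Xi g \<beta> ul uu x}"

end

theory Submission
  imports Defs
begin

lemma set_conv:
  fixes S :: "(real^'n) set" and al :: "real^'n"
  assumes S: "convex S" and f: "convex_on S f" and h: "concave_on S h"
  shows "convex {(x, v). x \<in> S \<and> f x \<le> b0 * v - al \<bullet> x \<and> b0 * v - al \<bullet> x \<le> h x}"
  unfolding convex_def
proof (clarsimp)
  fix x1 v1 x2 v2 and u w :: real
  assume x1: "x1 \<in> S" and a1: "f x1 \<le> b0 * v1 - al \<bullet> x1" "b0 * v1 - al \<bullet> x1 \<le> h x1"
    and x2: "x2 \<in> S" and a2: "f x2 \<le> b0 * v2 - al \<bullet> x2" "b0 * v2 - al \<bullet> x2 \<le> h x2"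
    and u: "0 \<le> u" and w: "0 \<le> w" and uw: "u + w = 1"
  have L: "b0 * (u * v1 + w * v2) - al \<bullet> (u *\<^sub>R x1 + w *\<^sub>R x2)
      = u * (b0 * v1 - al \<bullet> x1) + w * (b0 * v2 - al \<bullet> x2)"
    by (simp add: inner_add_right algebra_simps)
  have m: "u *\<^sub>R x1 + w *\<^sub>R x2 \<in> S" using S x1 x2 u w uw unfolding convex_def by blast
  have "f (u *\<^sub>R x1 + w *\<^sub>R x2) \<le> u * f x1 + w * f x2"
    using f x1 x2 u w uw unfolding convex_on_def by blast
  also have "\<dots> \<le> u * (b0 * v1 - al \<bullet> x1) + w * (b0 * v2 - al \<bullet> x2)"
    using a1 a2 u w by (simp add: add_mono mult_left_mono)
  finally have 1: "f (u *\<^sub>R x1 + w *\<^sub>R x2) \<le> b0 * (u * v1 + w * v2) - al \<bullet> (u *\<^sub>R x1 + w *\<^sub>R x2)"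
    using L by simp
  have "u * (b0 * v1 - al \<bullet> x1) + w * (b0 * v2 - al \<bullet> x2) \<le> u * h x1 + w * h x2"
    using a1 a2 u w by (simp add: add_mono mult_left_mono)
  also have "\<dots> \<le> h (u *\<^sub>R x1 + w *\<^sub>R x2)"
    using h x1 x2 u w uw unfolding concave_on_iff by blast
  finally have 2: "b0 * (u * v1 + w * v2) - al \<bullet> (u *\<^sub>R x1 + w *\<^sub>R x2) \<le> h (u *\<^sub>R x1 + w *\<^sub>R x2)"
    using L by simp
  show "u *\<^sub>R x1 + w *\<^sub>R x2 \<in> S \<and>
       f (u *\<^sub>R x1 + w *\<^sub>R x2) \<le> b0 * (u * v1 + w * v2) - al \<bullet> (u *\<^sub>R x1 + w *\<^sub>R x2) \<and>
       b0 * (u * v1 + w * v2) - al \<bullet> (u *\<^sub>R x1 + w *\<^sub>R x2) \<le> h (u *\<^sub>R x1 + w *\<^sub>R x2)"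
    using m 1 2 by blast
qed

lemma cc1: "concave_on S G \<Longrightarrow> (c::real) \<le> 0 \<Longrightarrow> convex_on S (\<lambda>x. G x * c)"
  using convex_on_cmul[of "-c" S "\<lambda>x. - G x"] by (simp add: concave_on_def mult.commute)
lemma cc2: "concave_on S G \<Longrightarrow> (c::real) \<ge> 0 \<Longrightarrow> concave_on S (\<lambda>x. G x * c)"
  using concave_on_cmul[of c S G] by (simp add: mult.commute)
lemma cc3: "convex_on S G \<Longrightarrow> (c::real) \<ge> 0 \<Longrightarrow> convex_on S (\<lambda>x. G x * c)"
  using convex_on_cmul[of c S G] by (simp add: mult.commute)
lemma cc4: "convex_on S G \<Longrightarrow> (c::real) \<le> 0 \<Longrightarrow> concave_on S (\<lambda>x. G x * c)"
  using convex_on_cmul[of "-c" S G] by (simp add: concave_on_def mult.commute)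

lemma zero_conc: "convex S \<Longrightarrow> \<forall>x\<in>S. G x = 0 \<Longrightarrow> concave_on S G"
  unfolding concave_on_iff convex_def by auto

lemma Zi_conv:
  fixes S :: "(real^'n) set" and al :: "real^'n"
  assumes S: "convex S" and bt: "\<beta> \<noteq> 0" and U: "ul < 0" "0 < uu"
    and Xg: "((\<forall>x\<in>S. g x \<ge> 0) \<and> concave_on S g) \<or> ((\<forall>x\<in>S. g x \<le> 0) \<and> convex_on S g)"
  shows "convex (Zi S g \<beta> al b0 ul uu)"
proof (cases "\<forall>y\<in>S. \<beta> * g y \<ge> 0")
  case True
  have G: "concave_on S (\<lambda>x. \<beta> * g x)"
  proof -
    consider "\<beta> > 0" "concave_on S g" | "\<beta> < 0" "convex_on S g" | "\<forall>x\<in>S. \<beta> * g x = 0"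
    proof (cases "\<beta> > 0")
      case b: True
      show ?thesis
      proof (cases "concave_on S g")
        case False
        with Xg have "\<forall>x\<in>S. g x \<le> 0" by blast
        have "\<forall>x\<in>S. \<beta> * g x = 0"
        proof
          fix x assume x: "x \<in> S"
          then have "g x \<le> 0" "\<beta> * g x \<ge> 0" using \<open>\<forall>x\<in>S. g x \<le> 0\<close> True by blast+
          moreover have "\<beta> * g x \<le> 0" using b \<open>g x \<le> 0\<close> by (simp add: mult_le_0_iff)
          ultimately show "\<beta> * g x = 0" by linarith
        qed
        with that show ?thesis by blast
      qed (use b that in blast)
    next
      case b: False
      with bt have b: "\<beta> < 0" by simp
      show ?thesis
      proof (cases "convex_on S g")
        case False
        with Xg have "\<forall>x\<in>S. g x \<ge> 0" by blast
        have "\<forall>x\<in>S. \<beta> * g x = 0"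
        proof
          fix x assume x: "x \<in> S"
          then have "g x \<ge> 0" "\<beta> * g x \<ge> 0" using \<open>\<forall>x\<in>S. g x \<ge> 0\<close> True by blast+
          moreover have "\<beta> * g x \<le> 0" using b \<open>g x \<ge> 0\<close> by (simp add: mult_le_0_iff)
          ultimately show "\<beta> * g x = 0" by linarith
        qed
        with that show ?thesis by blast
      qed (use b that in blast)
    qed
    then show ?thesis
    proof cases
      case 1 show ?thesis by (rule concave_on_cmul[OF less_imp_le[OF 1(1)] 1(2)])
    next
      case 2
      have "0 \<le> - \<beta>" using 2(1) by simp
      from convex_on_cmul[OF this 2(2)] have "convex_on S (\<lambda>x. - \<beta> * g x)" .
      moreover have "(\<lambda>x. - \<beta> * g x) = (\<lambda>x. - (\<beta> * g x))" by simp
      ultimately show ?thesis unfolding concave_on_def by simp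
    next
      case 3 show ?thesis by (rule zero_conc[OF S 3])
    qed
  qed
  have "Zi S g \<beta> al b0 ul uu = {(x, v). x \<in> S \<and> \<beta> * g x * ul \<le> b0 * v - al \<bullet> x \<and> b0 * v - al \<bullet> x \<le> \<beta> * g x * uu}"
  proof -
    have "Ui S g \<beta> ul uu x = {\<beta> * g x * ul .. \<beta> * g x * uu}" for x
      unfolding Ui_def by (rule if_P[OF True])
    then show ?thesis unfolding Zi_def by (simp only: atLeastAtMost_iff)
  qed
  moreover have "ul \<le> 0" "uu \<ge> 0" using U by auto
  ultimately show ?thesis
    using set_conv[OF S cc1[OF G, of ul] cc2[OF G, of uu], of b0 al] by simp
next
  case False
  then obtain y where y: "y \<in> S" "\<beta> * g y < 0" by force
  have G: "convex_on S (\<lambda>x. \<beta> * g x)"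
  proof -
    consider "\<beta> < 0" "concave_on S g" | "\<beta> > 0" "convex_on S g"
    proof (cases "(\<forall>x\<in>S. g x \<ge> 0) \<and> concave_on S g")
      case True
      then have "g y \<ge> 0" using y by blast
      with y have "\<beta> < 0" by (auto simp: mult_less_0_iff)
      with True that show ?thesis by blast
    next
      case False
      with Xg have A: "(\<forall>x\<in>S. g x \<le> 0) \<and> convex_on S g" by blast
      then have "g y \<le> 0" using y by blast
      with y have "\<beta> > 0" by (auto simp: mult_less_0_iff)
      with A that show ?thesis by blast
    qed
    then show ?thesis
    proof cases
      case 1 then show ?thesis using convex_on_cmul[of "-\<beta>" S "\<lambda>x. - g x"] by (simp add: concave_on_def)
    next
      case 2 then show ?thesis using convex_on_cmul[of \<beta> S g] by simp
    qed
  qed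
  have "Zi S g \<beta> al b0 ul uu = {(x, v). x \<in> S \<and> \<beta> * g x * uu \<le> b0 * v - al \<bullet> x \<and> b0 * v - al \<bullet> x \<le> \<beta> * g x * ul}"
  proof -
    have "Ui S g \<beta> ul uu x = {\<beta> * g x * uu .. \<beta> * g x * ul}" for x
      unfolding Ui_def by (rule if_not_P[OF False])
    then show ?thesis unfolding Zi_def by (simp only: atLeastAtMost_iff)
  qed
  moreover have "ul \<le> 0" "uu \<ge> 0" using U by auto
  ultimately show ?thesis
    using set_conv[OF S cc3[OF G, of uu] cc4[OF G, of ul], of b0 al] by simp
qed

lemma Z_pt:
  fixes S :: "(real^'n) set" and al :: "real^'n"
  assumes x: "x \<in> S" and bt: "\<beta> \<noteq> 0" and U: "ul < 0" "0 < uu" and b0: "b0 \<noteq> 0"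
    and Xg: "((\<forall>x\<in>S. g x \<ge> 0) \<and> concave_on S g) \<or> ((\<forall>x\<in>S. g x \<le> 0) \<and> convex_on S g)"
  shows "(x, v) \<in> Zi S g \<beta> al b0 ul uu \<longleftrightarrow>
    (if g x \<noteq> 0 then Psi g \<beta> al b0 x v \<in> {ul..uu} else v = al \<bullet> x / b0)"
proof -
  have sg: "\<forall>y\<in>S. g x * g y \<ge> 0"
  proof
    fix y assume y: "y \<in> S"
    from Xg show "g x * g y \<ge> 0"
    proof
      assume "(\<forall>x\<in>S. g x \<ge> 0) \<and> concave_on S g"
      then show ?thesis using x y by (simp add: mult_nonneg_nonneg)
    next
      assume "(\<forall>x\<in>S. g x \<le> 0) \<and> convex_on S g"
      then show ?thesis using x y by (simp add: mult_nonpos_nonpos)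
    qed
  qed
  define G where "G = \<beta> * g x"
  define L where "L = b0 * v - al \<bullet> x"
  have Psi: "Psi g \<beta> al b0 x v = L / G" by (simp add: Psi_def L_def G_def)
  have "g x = 0 \<or> G > 0 \<or> G < 0"
  proof (cases "g x = 0")
    case False
    then have "G \<noteq> 0" using bt by (simp add: G_def)
    then show ?thesis by linarith
  qed simp
  then consider "g x = 0" | "G > 0" | "G < 0" by blast
  then show ?thesis
  proof cases
    case 1
    have "v = al \<bullet> x / b0 \<longleftrightarrow> L = 0" using b0 by (auto simp: L_def field_simps)
    moreover have ui: "Ui S g \<beta> ul uu x = {0..0}" using 1 by (simp add: Ui_def)
    moreover have "(x, v) \<in> Zi S g \<beta> al b0 ul uu \<longleftrightarrow> L = 0"
      using x ui by (auto simp: Zi_def L_def)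
    ultimately show ?thesis using 1 by simp
  next
    case 2
    have all: "\<forall>y\<in>S. \<beta> * g y \<ge> 0"
    proof
      fix y assume "y \<in> S"
      then have "G * (\<beta> * g y) \<ge> 0" using sg
      proof -
        have "G * (\<beta> * g y) = (\<beta> * \<beta>) * (g x * g y)" by (simp add: G_def algebra_simps)
        moreover have "0 \<le> (\<beta> * \<beta>) * (g x * g y)"
          using sg \<open>y \<in> S\<close> by (intro mult_nonneg_nonneg[OF zero_le_square]) blast
        ultimately show ?thesis by (simp only:)
      qed
      then show "\<beta> * g y \<ge> 0" using 2 by (simp add: zero_le_mult_iff)
    qed
    have gx: "g x \<noteq> 0" using 2 G_def by auto
    have "L / G \<in> {ul..uu} \<longleftrightarrow> G * ul \<le> L \<and> L \<le> G * uu"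
      using 2 by (simp add: pos_le_divide_eq pos_divide_le_eq mult.commute)
    moreover have ui: "Ui S g \<beta> ul uu x = {G * ul .. G * uu}"
      unfolding Ui_def G_def by (rule if_P[OF all])
    moreover have "(x, v) \<in> Zi S g \<beta> al b0 ul uu \<longleftrightarrow> G * ul \<le> L \<and> L \<le> G * uu"
      using x ui by (simp add: Zi_def L_def)
    ultimately show ?thesis using gx Psi by simp
  next
    case 3
    have nall: "\<not> (\<forall>y\<in>S. \<beta> * g y \<ge> 0)" using 3 x G_def by force
    have gx: "g x \<noteq> 0" using 3 G_def by auto
    have "L / G \<in> {ul..uu} \<longleftrightarrow> G * uu \<le> L \<and> L \<le> G * ul"
      using 3 by (auto simp: neg_le_divide_eq neg_divide_le_eq mult.commute)
    moreover have ui: "Ui S g \<beta> ul uu x = {G * uu .. G * ul}"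
      unfolding Ui_def G_def by (rule if_not_P[OF nall])
    moreover have "(x, v) \<in> Zi S g \<beta> al b0 ul uu \<longleftrightarrow> G * uu \<le> L \<and> L \<le> G * ul"
      using x ui by (simp add: Zi_def L_def)
    ultimately show ?thesis using gx Psi by simp
  qed
qed

lemma Zset_mem: "(x, v) \<in> Zset X g \<beta> al b0 U \<longleftrightarrow>
  x \<in> X \<and> (if g x \<noteq> 0 then Psi g \<beta> al b0 x v \<in> U else v = al \<bullet> x / b0)"
  by (auto simp: Zset_def Xcirc_def)

theorem theorem1:
  fixes A :: "real^'n^'n" and b c :: "real^'n" and g :: "real^'n \<Rightarrow> real"
    and Xs :: "nat \<Rightarrow> (real^'n) set" and s :: nat
    and ul uu b0 :: real and a :: "nat \<Rightarrow> real"
  assumes ctrl: "controllable A b"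
    and g0: "g 0 \<noteq> 0"
    and s1: "1 \<le> s"
    and Xconv: "\<forall>i\<in>{1..s}. convex (Xs i)"
    and Xg: "\<forall>i\<in>{1..s}. ((\<forall>x\<in>Xs i. g x \<ge> 0) \<and> concave_on (Xs i) g)
                       \<or> ((\<forall>x\<in>Xs i. g x \<le> 0) \<and> convex_on (Xs i) g)"
    and X1: "0 \<in> interior (Xs 1)"
    and U: "ul < 0" "0 < uu"
    and c1: "\<forall>i < CARD('n) - 1. c \<bullet> (mat_pow A i *v b) = 0"
    and c2: "c \<bullet> (mat_pow A (CARD('n) - 1) *v b) \<noteq> 0"
    and b0: "b0 \<noteq> 0"
  shows "(\<forall>i\<in>{1..s}. convex (Zi (Xs i) g (c \<bullet> (mat_pow A (CARD('n) - 1) *v b))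
                          (alpha_vec A c a) b0 ul uu))
    \<and> Zset (\<Union>i\<in>{1..s}. Xs i) g (c \<bullet> (mat_pow A (CARD('n) - 1) *v b)) (alpha_vec A c a) b0 {ul..uu}
      = (\<Union>i\<in>{1..s}. Zi (Xs i) g (c \<bullet> (mat_pow A (CARD('n) - 1) *v b)) (alpha_vec A c a) b0 ul uu)"
proof -
  define \<beta> where "\<beta> = c \<bullet> (mat_pow A (CARD('n) - 1) *v b)"
  have bt: "\<beta> \<noteq> 0" using c2 \<beta>_def by simp
  have 1: "\<forall>i\<in>{1..s}. convex (Zi (Xs i) g \<beta> (alpha_vec A c a) b0 ul uu)"
    using Zi_conv[OF _ bt U] Xconv Xg by blast
  have 2: "Zset (\<Union>i\<in>{1..s}. Xs i) g \<beta> (alpha_vec A c a) b0 {ul..uu}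
      = (\<Union>i\<in>{1..s}. Zi (Xs i) g \<beta> (alpha_vec A c a) b0 ul uu)"
  proof (intro set_eqI iffI)
    fix z assume z: "z \<in> Zset (\<Union>i\<in>{1..s}. Xs i) g \<beta> (alpha_vec A c a) b0 {ul..uu}"
    obtain x v where zv: "z = (x, v)" by force
    from z have m: "x \<in> (\<Union>i\<in>{1..s}. Xs i) \<and> (if g x \<noteq> 0 then Psi g \<beta> (alpha_vec A c a) b0 x v \<in> {ul..uu}
        else v = alpha_vec A c a \<bullet> x / b0)" unfolding zv Zset_mem .
    then obtain i where i: "i \<in> {1..s}" "x \<in> Xs i" by blast
    have xg: "((\<forall>x\<in>Xs i. g x \<ge> 0) \<and> concave_on (Xs i) g) \<or> ((\<forall>x\<in>Xs i. g x \<le> 0) \<and> convex_on (Xs i) g)"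
      using Xg i(1) by blast
    have "(x, v) \<in> Zi (Xs i) g \<beta> (alpha_vec A c a) b0 ul uu"
      using Z_pt[OF i(2) bt U b0 xg] m by blast
    then show "z \<in> (\<Union>i\<in>{1..s}. Zi (Xs i) g \<beta> (alpha_vec A c a) b0 ul uu)" using i zv by blast
  next
    fix z assume "z \<in> (\<Union>i\<in>{1..s}. Zi (Xs i) g \<beta> (alpha_vec A c a) b0 ul uu)"
    then obtain i where i: "i \<in> {1..s}" and z: "z \<in> Zi (Xs i) g \<beta> (alpha_vec A c a) b0 ul uu" by blast
    obtain x v where zv: "z = (x, v)" by force
    have x: "x \<in> Xs i" using z unfolding zv Zi_def by blast
    have xg: "((\<forall>x\<in>Xs i. g x \<ge> 0) \<and> concave_on (Xs i) g) \<or> ((\<forall>x\<in>Xs i. g x \<le> 0) \<and> convex_on (Xs i) g)"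
      using Xg i by blast
    have "if g x \<noteq> 0 then Psi g \<beta> (alpha_vec A c a) b0 x v \<in> {ul..uu} else v = alpha_vec A c a \<bullet> x / b0"
      using Z_pt[OF x bt U b0 xg] z zv by blast
    moreover have "x \<in> (\<Union>i\<in>{1..s}. Xs i)" using x i by blast
    ultimately show "z \<in> Zset (\<Union>i\<in>{1..s}. Xs i) g \<beta> (alpha_vec A c a) b0 {ul..uu}"
      unfolding zv Zset_mem by blast
  qed
  show ?thesis using 1 2 unfolding \<beta>_def by simp
qed

end
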